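(* For every integer $n$ with $0\le n\le D$, $$\max_{\mathbf w\in\mathbb C^D:\ \|\mathbf w\|_0=n} q(\mathbf w)=\begin{cases}1 & n=0,\\ \dfrac{2^{n}-1}{4^{n-1}} & 1\le n\le D.\end{cases}$$
   Context: Let $D$ be a positive integer and $\mathcal S=\{(\pm1\pm i)/\sqrt2\}\subset\mathbb C$ (QPSK). $\|\mathbf w\|_0$ is the number of nonzero entries of $\mathbf w$. For $\mathbf s\in\mathcal S^D$ define $\mathfrak e(\mathbf s)=\{\tilde{\mathbf s}-\mathbf s:\tilde{\mathbf s}\in\mathcal S^D\setminus\{\mathbf s\}\}$. Two vectors $\mathbf a,\mathbf b$ are collinear if $[\mathbf a,\mathbf b]$ has rank at most $1$. For $\mathbf w\in\mathbb C^D$, $q(\mathbf w)=\Pr\big(\exists\,\mathbf e\in\mathfrak e(\mathbf s)\text{ collinear with }\mathbf w\big)$ with $\mathbf s$ uniformly distributed on $\mathcal S^D$. *)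

theory Defs
  imports "HOL-Analysis.Analysis" "HOL-Probability.Probability"
begin

definition QPSK :: "complex set" where
  "QPSK = {(a + b * \<i>) / complex_of_real (sqrt 2) | a b. a \<in> {-1, 1} \<and> b \<in> {-1, 1}}"

text \<open>S^D, vectors indexed by the finite type 'd with D = CARD('d).\<close>
definition QPSK_vecs :: "(complex ^ 'd) set" where
  "QPSK_vecs = {s. \<forall>i. s $ i \<in> QPSK}"

definition norm0 :: "complex ^ 'd \<Rightarrow> nat" where
  "norm0 w = card {i. w $ i \<noteq> 0}"

definition err_set :: "complex ^ 'd \<Rightarrow> (complex ^ 'd) set" where
  "err_set s = {s' - s | s'. s' \<in> QPSK_vecs \<and> s' \<noteq> s}"

text \<open>[a, b] has (complex) rank at most 1: both columns lie in a common
  complex line, i.e. in the span of a single vector.\<close>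
definition collinear_pair :: "complex ^ 'd \<Rightarrow> complex ^ 'd \<Rightarrow> bool" where
  "collinear_pair a b \<longleftrightarrow> (\<exists>v c1 c2. a = c1 *s v \<and> b = c2 *s v)"

definition q :: "complex ^ 'd \<Rightarrow> real" where
  "q w = measure_pmf.prob (pmf_of_set (QPSK_vecs :: (complex ^ 'd) set))
           {s. \<exists>e \<in> err_set s. collinear_pair e w}"

end

theory Submission
  imports Defs
begin

definition rr :: real where "rr = 1 / sqrt 2"
definition P1 :: "real set" where "P1 = {-rr, rr}"

lemma rr_pos: "rr > 0" unfolding rr_def by simp

lemma QPSK_iff: "z \<in> QPSK \<longleftrightarrow> Re z \<in> P1 \<and> Im z \<in> P1"
proof
  assume "z \<in> QPSK"
  then obtain a b where ab: "a \<in> {-1,1::complex}" "b \<in> {-1,1::complex}"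
     "z = (a + b * \<i>) / complex_of_real (sqrt 2)" unfolding QPSK_def by blast
  then show "Re z \<in> P1 \<and> Im z \<in> P1" unfolding P1_def rr_def
    by (auto simp: Re_divide_of_real Im_divide_of_real)
next
  assume h: "Re z \<in> P1 \<and> Im z \<in> P1"
  define a :: complex where "a = (if Re z = rr then 1 else -1)"
  define b :: complex where "b = (if Im z = rr then 1 else -1)"
  have "z = (a + b * \<i>) / complex_of_real (sqrt 2)"
    using h unfolding a_def b_def P1_def rr_def
    by (auto simp: complex_eq_iff Re_divide_of_real Im_divide_of_real)
  moreover have "a \<in> {-1,1}" "b \<in> {-1,1}" unfolding a_def b_def by auto
  ultimately show "z \<in> QPSK" unfolding QPSK_def by blast
qed

lemma QPSK_img: "QPSK = (\<lambda>(a,b). Complex a b) ` (P1 \<times> P1)"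
proof (rule set_eqI)
  fix z show "z \<in> QPSK \<longleftrightarrow> z \<in> (\<lambda>(a,b). Complex a b) ` (P1 \<times> P1)"
    unfolding QPSK_iff
    by (auto simp: image_iff complex_eq_iff)
qed

lemma inj_Complex: "inj_on (\<lambda>(a,b). Complex a b) X"
  by (auto simp: inj_on_def)

lemma card_P1: "card P1 = 2" using rr_pos unfolding P1_def by auto

lemma finite_QPSK: "finite QPSK" unfolding QPSK_img P1_def by auto

lemma card_QPSK: "card QPSK = 4"
  unfolding QPSK_img by (simp add: card_image inj_Complex card_cartesian_product card_P1)

lemma card_QPSK_pred:
  "card {s \<in> QPSK. A (Re s) \<and> B (Im s)} = card {a \<in> P1. A a} * card {b \<in> P1. B b}"
proof -
  have "{s \<in> QPSK. A (Re s) \<and> B (Im s)} = (\<lambda>(a,b). Complex a b) ` ({a \<in> P1. A a} \<times> {b \<in> P1. B b})"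
    unfolding QPSK_img by auto
  then show ?thesis by (simp add: card_image inj_Complex card_cartesian_product)
qed

definition nn :: "real \<Rightarrow> nat" where "nn x = card {a \<in> P1. a + x \<in> P1}"
definition NN :: "complex \<Rightarrow> nat" where "NN z = card {s \<in> QPSK. s + z \<in> QPSK}"
definition MM :: "complex \<Rightarrow> nat" where
  "MM z = card {s \<in> QPSK. s + z \<in> QPSK \<and> s + \<i> * z \<in> QPSK}"

lemma finite_P1: "finite P1" unfolding P1_def by auto

lemma NN_eq: "NN z = nn (Re z) * nn (Im z)"
proof -
  have "{s \<in> QPSK. s + z \<in> QPSK} = {s \<in> QPSK. Re s + Re z \<in> P1 \<and> Im s + Im z \<in> P1}"
    by (auto simp: QPSK_iff)
  then show ?thesis unfolding NN_def nn_def
    using card_QPSK_pred[of "\<lambda>a. a + Re z \<in> P1" "\<lambda>b. b + Im z \<in> P1"] by simp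
qed

lemma MM_eq: "MM z = card {a \<in> P1. a + Re z \<in> P1 \<and> a - Im z \<in> P1} *
   card {b \<in> P1. b + Im z \<in> P1 \<and> b + Re z \<in> P1}"
proof -
  have "{s \<in> QPSK. s + z \<in> QPSK \<and> s + \<i> * z \<in> QPSK} =
     {s \<in> QPSK. (Re s + Re z \<in> P1 \<and> Re s - Im z \<in> P1) \<and> (Im s + Im z \<in> P1 \<and> Im s + Re z \<in> P1)}"
    by (auto simp: QPSK_iff)
  then show ?thesis unfolding MM_def
    using card_QPSK_pred[of "\<lambda>a. a + Re z \<in> P1 \<and> a - Im z \<in> P1" "\<lambda>b. b + Im z \<in> P1 \<and> b + Re z \<in> P1"] by simp
qed

lemma nn_set: "{a \<in> P1. a + x \<in> P1} =
  (if x = 0 then P1 else if x = 2*rr then {-rr} else if x = -2*rr then {rr} else {})"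
  using rr_pos unfolding P1_def by auto

lemma nn_formula: "nn x = (if x = 0 then 2 else if x = 2*rr \<or> x = -2*rr then 1 else 0)"
  unfolding nn_def nn_set using card_P1 rr_pos by auto

lemma nn_le2: "nn x \<le> 2"
  unfolding nn_formula by auto

lemma nn_le1: assumes "x \<noteq> 0" shows "nn x \<le> 1"
  using assms unfolding nn_formula by auto

lemma nn_ge1: assumes "a \<in> P1" "a + x \<in> P1" shows "nn x \<ge> 1"
proof -
  have "x = 0 \<or> x = 2*rr \<or> x = -2*rr" using assms unfolding P1_def by auto
  then show ?thesis unfolding nn_formula by auto
qed

lemma P1_neg: "a \<in> P1 \<Longrightarrow> -a \<in> P1" unfolding P1_def by auto

lemma nn_neg: "nn (-x) = nn x"
  unfolding nn_formula by auto

lemma NN_le2: assumes "z \<noteq> 0" shows "NN z \<le> 2"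
proof (cases "Re z = 0")
  case False
  have "nn (Re z) * nn (Im z) \<le> 1 * 2" by (rule mult_le_mono[OF nn_le1[OF False] nn_le2])
  then show ?thesis unfolding NN_eq by simp
next
  case True
  then have "Im z \<noteq> 0" using assms complex_eq_iff by auto
  have "nn (Re z) * nn (Im z) \<le> 2 * 1" by (rule mult_le_mono[OF nn_le2 nn_le1[OF \<open>Im z \<noteq> 0\<close>]])
  then show ?thesis unfolding NN_eq by simp
qed

lemma NN_rot: "NN (\<i> * z) = NN z"
  unfolding NN_eq using nn_neg by simp

lemma MM_le1: assumes "z \<noteq> 0" shows "MM z \<le> 1"
proof (cases "Re z = 0")
  case False
  have "card {a \<in> P1. a + Re z \<in> P1 \<and> a - Im z \<in> P1} \<le> nn (Re z)"
    unfolding nn_def by (rule card_mono) (auto simp: finite_P1)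
  moreover have "card {b \<in> P1. b + Im z \<in> P1 \<and> b + Re z \<in> P1} \<le> nn (Re z)"
    unfolding nn_def by (rule card_mono) (auto simp: finite_P1)
  ultimately show ?thesis unfolding MM_eq
    using mult_le_mono[OF order_trans[OF _ nn_le1[OF False]] order_trans[OF _ nn_le1[OF False]]] by simp
next
  case True
  then have ne: "Im z \<noteq> 0" "- Im z \<noteq> 0" using assms complex_eq_iff by auto
  have "card {a \<in> P1. a + Re z \<in> P1 \<and> a - Im z \<in> P1} \<le> nn (- Im z)"
    unfolding nn_def by (rule card_mono) (auto simp: finite_P1)
  moreover have "card {b \<in> P1. b + Im z \<in> P1 \<and> b + Re z \<in> P1} \<le> nn (Im z)"
    unfolding nn_def by (rule card_mono) (auto simp: finite_P1)
  ultimately show ?thesis unfolding MM_eq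
    using mult_le_mono[OF order_trans[OF _ nn_le1[OF ne(2)]] order_trans[OF _ nn_le1[OF ne(1)]]] by simp
qed

lemma MM_ge1: assumes "z \<noteq> 0" "NN z = 2" shows "MM z \<ge> 1"
proof (cases "Re z = 0")
  case False
  then have a: "nn (Re z) \<le> 1" by (rule nn_le1)
  have b: "nn (Im z) \<le> 2" by (rule nn_le2)
  have c: "nn (Re z) * nn (Im z) = 2" using assms(2) unfolding NN_eq .
  have "nn (Re z) = 1 \<and> nn (Im z) = 2"
  proof (cases "nn (Re z) = 0")
    case True then show ?thesis using c by simp
  next
    case False then have "nn (Re z) = 1" using a by linarith
    then show ?thesis using c by simp
  qed
  then have "Im z = 0" "nn (Re z) = 1" using nn_le1 by fastforce+
  moreover have "{a \<in> P1. a + Re z \<in> P1 \<and> a - 0 \<in> P1} = {a \<in> P1. a + Re z \<in> P1}" by auto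
  moreover have "{b \<in> P1. b + 0 \<in> P1 \<and> b + Re z \<in> P1} = {a \<in> P1. a + Re z \<in> P1}" by auto
  ultimately show ?thesis unfolding MM_eq unfolding nn_def by simp
next
  case True
  have n0: "nn 0 = 2" unfolding nn_def using card_P1 by simp
  then have "nn (Im z) = 1" using assms(2) True unfolding NN_eq by simp
  moreover have "{a \<in> P1. a + Re z \<in> P1 \<and> a - Im z \<in> P1} = {a \<in> P1. a + (- Im z) \<in> P1}"
    using True by auto
  moreover have "{b \<in> P1. b + Im z \<in> P1 \<and> b + Re z \<in> P1} = {a \<in> P1. a + Im z \<in> P1}"
    using True by auto
  ultimately show ?thesis unfolding MM_eq using nn_neg[of "Im z"] unfolding nn_def by simp
qed

lemma QPSK_rot: "s \<in> QPSK \<Longrightarrow> \<i> * s \<in> QPSK" by (auto simp: QPSK_iff P1_neg)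
lemma QPSK_neg: "s \<in> QPSK \<Longrightarrow> - s \<in> QPSK" by (auto simp: QPSK_iff P1_neg)
lemma QPSK_nz: "s \<in> QPSK \<Longrightarrow> s \<noteq> 0" using rr_pos by (auto simp: QPSK_iff P1_def)

lemma t_props: assumes "s \<in> QPSK"
  shows "s + (\<i> - 1) * s \<in> QPSK" "s + \<i> * ((\<i> - 1) * s) \<in> QPSK" "(\<i> - 1) * s \<noteq> 0"
proof -
  have "s + (\<i> - 1) * s = \<i> * s" by (simp add: algebra_simps)
  then show "s + (\<i> - 1) * s \<in> QPSK" using QPSK_rot assms by simp
  have "s + \<i> * ((\<i> - 1) * s) = - (\<i> * s)" by (simp add: algebra_simps)
  then show "s + \<i> * ((\<i> - 1) * s) \<in> QPSK" using QPSK_rot QPSK_neg assms by simp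
  have "\<i> - 1 \<noteq> 0" by (simp add: complex_eq_iff)
  then show "(\<i> - 1) * s \<noteq> 0" using QPSK_nz[OF assms] by simp
qed

lemma NN_t: assumes "s \<in> QPSK" shows "NN ((\<i> - 1) * s) \<ge> 2"
proof -
  let ?t = "(\<i> - 1) * s"
  have eq: "s + \<i> * ?t + ?t = - s" by (simp add: algebra_simps)
  have "s + \<i> * ?t + ?t \<in> QPSK" by (subst eq) (rule QPSK_neg[OF assms])
  then have "{s, s + \<i> * ?t} \<subseteq> {x \<in> QPSK. x + ?t \<in> QPSK}"
    using t_props[OF assms] assms QPSK_neg by auto
  moreover have "s \<noteq> s + \<i> * ?t" using t_props(3)[OF assms] by simp
  moreover have "finite {x \<in> QPSK. x + ?t \<in> QPSK}" using finite_QPSK by simp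
  ultimately show ?thesis unfolding NN_def
    using card_mono[of "{x \<in> QPSK. x + ?t \<in> QPSK}" "{s, s + \<i> * ?t}"] by simp
qed

lemma diffP1: "a \<in> P1 \<Longrightarrow> a + x \<in> P1 \<Longrightarrow> x = 0 \<or> x = 2*rr \<or> x = -2*rr"
  unfolding P1_def by auto

lemma P1_cases: "a \<in> P1 \<Longrightarrow> a = -rr \<or> a = rr" unfolding P1_def by auto

lemma dprime: assumes "s' \<in> QPSK" "s' + z \<in> QPSK" "s \<in> QPSK" "s + (1 + \<i>) * z \<in> QPSK"
  shows "s + z \<in> QPSK \<and> s + \<i> * z \<in> QPSK"
proof -
  have r: "rr > 0" by (rule rr_pos)
  have x: "Re z = 0 \<or> Re z = 2*rr \<or> Re z = -2*rr" "Im z = 0 \<or> Im z = 2*rr \<or> Im z = -2*rr"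
    using assms(1,2) diffP1 unfolding QPSK_iff by auto
  have a: "Re s = -rr \<or> Re s = rr" "Im s = -rr \<or> Im s = rr"
    using assms(3) P1_cases unfolding QPSK_iff by auto
  have h: "Re s + Re z - Im z \<in> {-rr,rr}" "Im s + Re z + Im z \<in> {-rr,rr}"
    using assms(4) unfolding QPSK_iff P1_def by (auto simp: algebra_simps)
  have "Re s + Re z \<in> {-rr,rr} \<and> Im s + Im z \<in> {-rr,rr} \<and> Re s - Im z \<in> {-rr,rr} \<and> Im s + Re z \<in> {-rr,rr}"
    using x a h r by (elim disjE) auto
  then show ?thesis unfolding QPSK_iff P1_def by auto
qed

lemma cand: assumes "s \<in> QPSK" "s + z \<in> QPSK" "z \<noteq> 0"
  shows "z = (\<i> - 1) * s \<or> z = \<i> * ((\<i> - 1) * s) \<or> z = (1 + \<i>) * ((\<i> - 1) * s)"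
proof -
  have r: "rr > 0" by (rule rr_pos)
  have a: "Re s = -rr \<or> Re s = rr" "Im s = -rr \<or> Im s = rr"
    using assms(1) P1_cases unfolding QPSK_iff by auto
  have b: "Re s + Re z = -rr \<or> Re s + Re z = rr" "Im s + Im z = -rr \<or> Im s + Im z = rr"
    using assms(2) P1_cases unfolding QPSK_iff by auto
  have nz: "Re z \<noteq> 0 \<or> Im z \<noteq> 0" using assms(3) complex_eq_iff by auto
  have "(Re z = - Re s - Im s \<and> Im z = Re s - Im s) \<or> (Re z = Im s - Re s \<and> Im z = - Re s - Im s)
     \<or> (Re z = - 2 * Re s \<and> Im z = - 2 * Im s)"
    using a b nz r by (elim disjE) auto
  then show ?thesis by (auto simp: complex_eq_iff algebra_simps)
qed

lemma card_vec:
  assumes "\<And>j. finite (B j)"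
  shows "card {s::'a^'d. \<forall>j. s$j \<in> B j} = (\<Prod>j\<in>UNIV. card (B j))"
    and "finite {s::'a^'d. \<forall>j. s$j \<in> B j}"
proof -
  have inj: "inj_on vec_nth X" for X :: "('a^'d) set" by (auto simp: inj_on_def vec_eq_iff)
  have img: "vec_nth ` {s::'a^'d. \<forall>j. s$j \<in> B j} = Pi\<^sub>E UNIV B"
  proof (rule set_eqI)
    fix f :: "'d \<Rightarrow> 'a"
    show "f \<in> vec_nth ` {s::'a^'d. \<forall>j. s$j \<in> B j} \<longleftrightarrow> f \<in> Pi\<^sub>E UNIV B"
    proof
      assume "f \<in> Pi\<^sub>E UNIV B"
      then have "vec_lambda f \<in> {s::'a^'d. \<forall>j. s$j \<in> B j}" "f = vec_nth (vec_lambda f)"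
        by (auto simp: PiE_iff)
      then show "f \<in> vec_nth ` {s::'a^'d. \<forall>j. s$j \<in> B j}" by blast
    qed (auto simp: PiE_iff)
  qed
  have fin: "finite (Pi\<^sub>E UNIV B)" using assms by (simp add: finite_PiE)
  show "card {s::'a^'d. \<forall>j. s$j \<in> B j} = (\<Prod>j\<in>UNIV. card (B j))"
    using card_image[OF inj, of "{s::'a^'d. \<forall>j. s$j \<in> B j}"] img by (simp add: card_PiE)
  show "finite {s::'a^'d. \<forall>j. s$j \<in> B j}"
    using fin img finite_image_iff[OF inj] by metis
qed

lemma QPSK_vecs_eq: "QPSK_vecs = {s. \<forall>j. s$j \<in> QPSK}" unfolding QPSK_vecs_def by simp

lemma card_QPSK_vecs: "card (QPSK_vecs :: (complex^'d) set) = 4 ^ CARD('d)"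
  unfolding QPSK_vecs_eq using card_vec[of "\<lambda>_. QPSK"] finite_QPSK card_QPSK by simp

lemma finite_QPSK_vecs: "finite (QPSK_vecs :: (complex^'d) set)"
  unfolding QPSK_vecs_eq using card_vec[of "\<lambda>_. QPSK"] finite_QPSK by simp

lemma QPSK_vecs_ne: "(QPSK_vecs :: (complex^'d) set) \<noteq> {}"
  using card_QPSK_vecs[where 'd='d] by (metis card.empty power_not_zero zero_neq_numeral)

definition Aset :: "complex^'d \<Rightarrow> (complex^'d) set" where
  "Aset w = {s. (\<forall>j. s$j \<in> QPSK) \<and> (\<exists>c. c \<noteq> 0 \<and> (\<forall>j. s$j + c * w$j \<in> QPSK))}"

lemma q_eq: fixes w :: "complex^'d" assumes "w \<noteq> 0"
  shows "q w = card (Aset w) / 4 ^ CARD('d)"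
proof -
  have "QPSK_vecs \<inter> {s. \<exists>e \<in> err_set s. collinear_pair e w} = Aset w"
  proof (rule set_eqI)
    fix s :: "complex^'d"
    show "s \<in> QPSK_vecs \<inter> {s. \<exists>e \<in> err_set s. collinear_pair e w} \<longleftrightarrow> s \<in> Aset w"
    proof
      assume "s \<in> QPSK_vecs \<inter> {s. \<exists>e \<in> err_set s. collinear_pair e w}"
      then obtain s' v c1 c2 where h: "s \<in> QPSK_vecs" "s' \<in> QPSK_vecs" "s' \<noteq> s"
        "s' - s = c1 *s v" "w = c2 *s v"
        unfolding err_set_def collinear_pair_def by blast
      have c2: "c2 \<noteq> 0" using h(5) assms by auto
      have "s' - s = (c1 / c2) *s w" using h(4,5) c2 by (simp add: vec_eq_iff)
      then have s': "s' = s + (c1 / c2) *s w" by (metis add.commute diff_add_cancel)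
      have "c1 \<noteq> 0" using h(3,4) by auto
      then have "c1 / c2 \<noteq> 0" using c2 by simp
      moreover have "\<forall>j. s$j + (c1/c2) * w$j \<in> QPSK"
        using h(2) s' unfolding QPSK_vecs_eq by auto
      ultimately show "s \<in> Aset w" using h(1) unfolding Aset_def QPSK_vecs_eq by blast
    next
      assume "s \<in> Aset w"
      then obtain c where c: "c \<noteq> 0" "\<forall>j. s$j + c * w$j \<in> QPSK" "\<forall>j. s$j \<in> QPSK"
        unfolding Aset_def by blast
      let ?s' = "s + c *s w"
      have "?s' \<in> QPSK_vecs" using c unfolding QPSK_vecs_eq by simp
      moreover have "?s' \<noteq> s" using c(1) assms by (auto simp: vec_eq_iff)
      moreover have "collinear_pair (?s' - s) w" unfolding collinear_pair_def
        by (rule exI[of _ w], rule exI[of _ c], rule exI[of _ 1]) simp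
      ultimately show "s \<in> QPSK_vecs \<inter> {s. \<exists>e \<in> err_set s. collinear_pair e w}"
        using c(3) unfolding err_set_def QPSK_vecs_eq by blast
    qed
  qed
  moreover have "q w = real (card (QPSK_vecs \<inter> {s. \<exists>e \<in> err_set s. collinear_pair e w})) /
      real (card (QPSK_vecs :: (complex^'d) set))"
    unfolding q_def by (rule measure_pmf_of_set[OF QPSK_vecs_ne finite_QPSK_vecs])
  ultimately show ?thesis using card_QPSK_vecs[where 'd='d] by simp
qed

lemma q_zero: "q (0 :: complex^'d) = 1"
proof -
  have "QPSK_vecs \<inter> {s. \<exists>e \<in> err_set s. collinear_pair e (0::complex^'d)} = QPSK_vecs"
  proof (rule set_eqI, rule iffI)
    fix s :: "complex^'d"
    assume s: "s \<in> QPSK_vecs"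
    then have "-s \<in> QPSK_vecs" unfolding QPSK_vecs_eq using QPSK_neg by auto
    moreover have "-s \<noteq> s"
    proof
      assume h: "-s = s"
      have "(-s) $ undefined = s $ undefined" by (simp only: h)
      then have "s $ undefined = 0" by simp
      then show False using s QPSK_nz unfolding QPSK_vecs_eq by auto
    qed
    moreover have "collinear_pair (-s - s) 0" unfolding collinear_pair_def
      by (rule exI[of _ "-s - s"], rule exI[of _ 1], rule exI[of _ 0]) simp
    ultimately show "s \<in> QPSK_vecs \<inter> {s. \<exists>e \<in> err_set s. collinear_pair e (0::complex^'d)}"
      using s unfolding err_set_def by blast
  qed auto
  moreover have "q (0 :: complex^'d) = real (card (QPSK_vecs \<inter> {s. \<exists>e \<in> err_set s. collinear_pair e (0 :: complex^'d)})) /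
      real (card (QPSK_vecs :: (complex^'d) set))"
    unfolding q_def by (rule measure_pmf_of_set[OF QPSK_vecs_ne finite_QPSK_vecs])
  moreover have "card (QPSK_vecs :: (complex^'d) set) > 0"
    using finite_QPSK_vecs QPSK_vecs_ne by (simp add: card_gt_0_iff)
  ultimately show ?thesis by simp
qed

definition BB :: "complex^'d \<Rightarrow> 'd \<Rightarrow> complex \<Rightarrow> complex \<Rightarrow> 'd \<Rightarrow> complex set" where
  "BB w i0 s0 c j = {x \<in> QPSK. (j = i0 \<longrightarrow> x = s0) \<and> x + c * w$j \<in> QPSK}"
definition EE :: "complex^'d \<Rightarrow> 'd \<Rightarrow> complex \<Rightarrow> complex \<Rightarrow> (complex^'d) set" where
  "EE w i0 s0 c = {s. \<forall>j. s$j \<in> BB w i0 s0 c j}"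
definition As :: "complex^'d \<Rightarrow> 'd \<Rightarrow> complex \<Rightarrow> (complex^'d) set" where
  "As w i0 s0 = {s \<in> Aset w. s$i0 = s0}"
definition gg :: "complex^'d \<Rightarrow> 'd \<Rightarrow> 'd \<Rightarrow> nat" where
  "gg w i0 j = (if j = i0 then 1 else if w$j \<noteq> 0 then 2 else 4)"
definition hh :: "complex^'d \<Rightarrow> 'd \<Rightarrow> nat" where
  "hh w j = (if w$j \<noteq> 0 then 1 else 4)"

lemma finite_BB: "finite (BB w i0 s0 c j)"
  unfolding BB_def using finite_QPSK by simp

lemma card_EE: "card (EE w i0 s0 c) = (\<Prod>j\<in>UNIV. card (BB w i0 s0 c j))"
  unfolding EE_def by (rule card_vec(1)[OF finite_BB])

lemma finite_EE: "finite (EE w i0 s0 c)"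
  unfolding EE_def by (rule card_vec(2)[OF finite_BB])

lemma EE_Int: "EE w i0 s0 c \<inter> EE w i0 s0 c' = {s. \<forall>j. s$j \<in> BB w i0 s0 c j \<inter> BB w i0 s0 c' j}"
  unfolding EE_def by auto

lemma card_EE_Int: "card (EE w i0 s0 c \<inter> EE w i0 s0 c') =
   (\<Prod>j\<in>UNIV. card (BB w i0 s0 c j \<inter> BB w i0 s0 c' j))"
  unfolding EE_Int by (rule card_vec(1)) (simp add: finite_BB)

lemma As_eq: "As w i0 s0 = {s. \<exists>c. c \<noteq> 0 \<and> s \<in> EE w i0 s0 c}"
  unfolding As_def Aset_def EE_def BB_def by auto

lemma finite_As: "finite (As w i0 s0)"
proof -
  have "As w i0 s0 \<subseteq> QPSK_vecs" unfolding As_def Aset_def QPSK_vecs_eq by auto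
  then show ?thesis using finite_QPSK_vecs finite_subset by blast
qed

lemma BB_other: "j \<noteq> i0 \<Longrightarrow> BB w i0 s0 c j = {x \<in> QPSK. x + c * w$j \<in> QPSK}"
  unfolding BB_def by auto

lemma card_BB_other: "j \<noteq> i0 \<Longrightarrow> card (BB w i0 s0 c j) = NN (c * w$j)"
  unfolding BB_other NN_def by simp

lemma BB_zero: "j \<noteq> i0 \<Longrightarrow> w$j = 0 \<Longrightarrow> BB w i0 s0 c j = QPSK"
  unfolding BB_def by auto

lemma cardBB_le: assumes "c \<noteq> 0" shows "card (BB w i0 s0 c j) \<le> gg w i0 j"
proof -
  consider "j = i0" | "j \<noteq> i0" "w$j \<noteq> 0" | "j \<noteq> i0" "w$j = 0" by blast
  then show ?thesis
  proof cases
    case 1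
    then have "BB w i0 s0 c j \<subseteq> {s0}" unfolding BB_def by auto
    then have "card (BB w i0 s0 c j) \<le> card {s0}" by (rule card_mono[rotated]) simp
    then show ?thesis using 1 unfolding gg_def by simp
  next
    case 2
    then show ?thesis using NN_le2[of "c * w$j"] assms unfolding card_BB_other[OF 2(1)] gg_def by simp
  next
    case 3
    then show ?thesis unfolding BB_zero[OF 3] gg_def using card_QPSK by simp
  qed
qed

lemma prod_gg: fixes w :: "complex^'d" assumes "w$i0 \<noteq> 0"
  shows "(\<Prod>j\<in>UNIV. gg w i0 j) = 2^(norm0 w - 1) * 4^(CARD('d) - norm0 w)"
proof -
  let ?T = "{j. w$j \<noteq> 0}"
  have "(\<Prod>j\<in>UNIV. gg w i0 j) = (\<Prod>j\<in>UNIV - ?T. gg w i0 j) * (\<Prod>j\<in>?T. gg w i0 j)"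
    by (rule prod.subset_diff) auto
  also have "(\<Prod>j\<in>UNIV - ?T. gg w i0 j) = (\<Prod>j\<in>UNIV - ?T. 4)"
    by (rule prod.cong) (auto simp: gg_def assms)
  also have "\<dots> = 4 ^ (CARD('d) - norm0 w)"
    by (simp add: card_Diff_subset norm0_def)
  also have "(\<Prod>j\<in>?T. gg w i0 j) = gg w i0 i0 * (\<Prod>j\<in>?T - {i0}. gg w i0 j)"
    by (rule prod.remove) (auto simp: assms)
  also have "(\<Prod>j\<in>?T - {i0}. gg w i0 j) = (\<Prod>j\<in>?T - {i0}. 2)"
    by (rule prod.cong) (auto simp: gg_def)
  also have "\<dots> = 2 ^ (norm0 w - 1)"
    using assms by (simp add: norm0_def)
  finally show ?thesis by (simp add: gg_def)
qed

lemma prod_hh: fixes w :: "complex^'d" shows "(\<Prod>j\<in>UNIV. hh w j) = 4^(CARD('d) - norm0 w)"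
proof -
  let ?T = "{j. w$j \<noteq> 0}"
  have "(\<Prod>j\<in>UNIV. hh w j) = (\<Prod>j\<in>UNIV - ?T. hh w j) * (\<Prod>j\<in>?T. hh w j)"
    by (rule prod.subset_diff) auto
  also have "(\<Prod>j\<in>UNIV - ?T. hh w j) = (\<Prod>j\<in>UNIV - ?T. 4)"
    by (rule prod.cong) (auto simp: hh_def)
  also have "\<dots> = 4 ^ (CARD('d) - norm0 w)"
    by (simp add: card_Diff_subset norm0_def)
  also have "(\<Prod>j\<in>?T. hh w j) = 1"
    by (rule prod.neutral) (auto simp: hh_def)
  finally show ?thesis by simp
qed

lemma setup_a:
  assumes "w$i0 \<noteq> 0" "s0 \<in> QPSK" "a = (\<i> - 1) * s0 / w$i0"
  shows "a \<noteq> 0" "a * w$i0 = (\<i> - 1) * s0" "BB w i0 s0 a i0 = {s0}"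
    "BB w i0 s0 (\<i> * a) i0 = {s0}" "card (BB w i0 s0 (\<i> * a) j) = card (BB w i0 s0 a j)"
proof -
  show aw: "a * w$i0 = (\<i> - 1) * s0" using assms by simp
  show "a \<noteq> 0" using aw t_props(3)[OF assms(2)] by auto
  show b1: "BB w i0 s0 a i0 = {s0}" unfolding BB_def using aw t_props(1)[OF assms(2)] assms(2) by auto
  have e: "s0 + (\<i> * a) * w$i0 \<in> QPSK" using t_props(2)[OF assms(2)] by (simp only: mult.assoc aw)
  show b2: "BB w i0 s0 (\<i> * a) i0 = {s0}" unfolding BB_def using e assms(2) by auto
  show "card (BB w i0 s0 (\<i> * a) j) = card (BB w i0 s0 a j)"
  proof (cases "j = i0")
    case True then show ?thesis using b1 b2 by simp
  next
    case False
    have "(\<i> * a) * w$j = \<i> * (a * w$j)" by (simp add: mult.assoc)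
    then show ?thesis unfolding card_BB_other[OF False] using NN_rot[of "a * w$j"] by (simp only:)
  qed
qed

lemma As_sub3:
  assumes "w$i0 \<noteq> 0" "s0 \<in> QPSK" "a = (\<i> - 1) * s0 / w$i0"
  shows "As w i0 s0 \<subseteq> EE w i0 s0 a \<union> EE w i0 s0 (\<i> * a) \<union> EE w i0 s0 ((1 + \<i>) * a)"
proof
  fix s assume "s \<in> As w i0 s0"
  then obtain c where c: "c \<noteq> 0" "s \<in> EE w i0 s0 c" unfolding As_eq by blast
  then have "s$i0 \<in> BB w i0 s0 c i0" unfolding EE_def by blast
  then have h: "s0 + c * w$i0 \<in> QPSK" unfolding BB_def by auto
  have nz: "c * w$i0 \<noteq> 0" using c(1) assms(1) by simp
  have aw: "a * w$i0 = (\<i> - 1) * s0" using assms by simp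
  from cand[OF assms(2) h nz]
  have "c * w$i0 = a * w$i0 \<or> c * w$i0 = (\<i> * a) * w$i0 \<or> c * w$i0 = ((1 + \<i>) * a) * w$i0"
    using aw by (simp add: mult.assoc)
  then have "c = a \<or> c = \<i> * a \<or> c = (1 + \<i>) * a" using assms(1) by auto
  then show "s \<in> EE w i0 s0 a \<union> EE w i0 s0 (\<i> * a) \<union> EE w i0 s0 ((1 + \<i>) * a)" using c by auto
qed

lemma EE_le: assumes "c \<noteq> 0" shows "card (EE w i0 s0 c) \<le> (\<Prod>j\<in>UNIV. gg w i0 j)"
  unfolding card_EE by (rule prod_mono) (simp add: cardBB_le[OF assms])

lemma EE_empty: "BB w i0 s0 c j = {} \<Longrightarrow> EE w i0 s0 c = {}"
  unfolding EE_def by auto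

lemma prod_half:
  fixes f g :: "'d::finite \<Rightarrow> nat"
  assumes "\<And>j. f j \<le> g j" "2 * f j0 \<le> g j0"
  shows "2 * (\<Prod>j\<in>UNIV. f j) \<le> (\<Prod>j\<in>UNIV. g j)"
proof -
  have "(\<Prod>j\<in>UNIV. f j) = f j0 * (\<Prod>j\<in>UNIV - {j0}. f j)" by (rule prod.remove) auto
  moreover have "(\<Prod>j\<in>UNIV. g j) = g j0 * (\<Prod>j\<in>UNIV - {j0}. g j)" by (rule prod.remove) auto
  moreover have "(\<Prod>j\<in>UNIV - {j0}. f j) \<le> (\<Prod>j\<in>UNIV - {j0}. g j)"
    by (rule prod_mono) (simp add: assms)
  ultimately show ?thesis using mult_le_mono[OF assms(2)] by (simp add: mult.assoc)
qed

lemma norm0_ge1: fixes w :: "complex^'d" assumes "w$i0 \<noteq> 0" shows "norm0 w \<ge> 1"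
proof -
  have "{j. w$j \<noteq> 0} \<noteq> {}" using assms by auto
  then have "card {j. w$j \<noteq> 0} > 0" by (simp add: card_gt_0_iff)
  then show ?thesis unfolding norm0_def by simp
qed

lemma arith_X: fixes n K G :: nat assumes "n \<ge> 1" "G = 2^(n-1) * K"
  shows "(2^n - 1) * K = 2 * G - K" "G \<le> (2^n - 1) * K"
proof -
  obtain m where m: "n = Suc m" using assms(1) by (cases n) auto
  have p: "(1::nat) \<le> 2^m" by simp
  show "(2^n - 1) * K = 2 * G - K" using assms(2) m by (simp add: diff_mult_distrib)
  have "2^m \<le> 2 * 2^m - (1::nat)" using p by linarith
  then have "2^m * K \<le> (2 * 2^m - 1) * K" by (rule mult_le_mono1)
  then show "G \<le> (2^n - 1) * K" using assms(2) m by simp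
qed

lemma BB_Int_other: "j \<noteq> i0 \<Longrightarrow>
  BB w i0 s0 a j \<inter> BB w i0 s0 (\<i> * a) j = {x \<in> QPSK. x + a * w$j \<in> QPSK \<and> x + \<i> * (a * w$j) \<in> QPSK}"
  unfolding BB_other by (auto simp: mult.assoc)

lemma As_upper:
  fixes w :: "complex^'d"
  assumes w0: "w$i0 \<noteq> 0" and s0: "s0 \<in> QPSK"
  shows "card (As w i0 s0) \<le> (2^norm0 w - 1) * 4^(CARD('d) - norm0 w)"
proof -
  define a where "a = (\<i> - 1) * s0 / w$i0"
  note st = setup_a[OF w0 s0 a_def]
  define n where "n = norm0 w"
  define K where "K = (4::nat)^(CARD('d) - n)"
  define G where "G = (\<Prod>j\<in>UNIV. gg w i0 j)"
  have G: "G = 2^(n-1) * K" unfolding G_def K_def n_def using prod_gg[OF w0] .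
  have n1: "n \<ge> 1" unfolding n_def using norm0_ge1[OF w0] .
  note X = arith_X[OF n1 G]
  define f where "f j = card (BB w i0 s0 a j)" for j
  have fE: "card (EE w i0 s0 a) = (\<Prod>j\<in>UNIV. f j)" unfolding f_def card_EE ..
  have fE2: "card (EE w i0 s0 (\<i> * a)) = (\<Prod>j\<in>UNIV. f j)" unfolding f_def card_EE st(5) ..
  have "1 + \<i> \<noteq> 0" by (simp add: complex_eq_iff)
  then have c3: "(1 + \<i>) * a \<noteq> 0" using st(1) by simp
  have "card (As w i0 s0) \<le> (2^n - 1) * K"
  proof (cases "\<exists>j. BB w i0 s0 a j = {}")
    case True
    then obtain j where j: "BB w i0 s0 a j = {}" by blast
    have "card (BB w i0 s0 (\<i> * a) j) = 0" using st(5)[of j] j by simp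
    then have "BB w i0 s0 (\<i> * a) j = {}" using finite_BB card_0_eq by blast
    then have "EE w i0 s0 a = {}" "EE w i0 s0 (\<i> * a) = {}" using EE_empty j by blast+
    then have "As w i0 s0 \<subseteq> EE w i0 s0 ((1 + \<i>) * a)" using As_sub3[OF w0 s0 a_def] by blast
    then have "card (As w i0 s0) \<le> card (EE w i0 s0 ((1 + \<i>) * a))" by (rule card_mono[OF finite_EE])
    also have "\<dots> \<le> G" unfolding G_def by (rule EE_le[OF c3])
    finally show ?thesis using X(2) by simp
  next
    case False
    then have ne: "\<And>j. BB w i0 s0 a j \<noteq> {}" by blast
    have sub: "EE w i0 s0 ((1 + \<i>) * a) \<subseteq> EE w i0 s0 a \<inter> EE w i0 s0 (\<i> * a)"
    proof
      fix s assume s: "s \<in> EE w i0 s0 ((1 + \<i>) * a)"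
      have "s$j \<in> BB w i0 s0 a j \<and> s$j \<in> BB w i0 s0 (\<i> * a) j" for j
      proof -
        obtain x where x: "x \<in> BB w i0 s0 a j" using ne[of j] by blast
        then have x1: "x \<in> QPSK" "x + a * w$j \<in> QPSK" unfolding BB_def by auto
        have sj: "s$j \<in> QPSK" "j = i0 \<longrightarrow> s$j = s0" "s$j + ((1 + \<i>) * a) * w$j \<in> QPSK"
          using s unfolding EE_def BB_def by auto
        have "s$j + (1 + \<i>) * (a * w$j) \<in> QPSK" using sj(3) by (simp only: mult.assoc)
        from dprime[OF x1 sj(1) this]
        have "s$j + a * w$j \<in> QPSK" "s$j + (\<i> * a) * w$j \<in> QPSK" by (simp_all only: mult.assoc)
        then show ?thesis using sj(1,2) unfolding BB_def by auto
      qed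
      then show "s \<in> EE w i0 s0 a \<inter> EE w i0 s0 (\<i> * a)" unfolding EE_def by auto
    qed
    have "As w i0 s0 \<subseteq> EE w i0 s0 a \<union> EE w i0 s0 (\<i> * a)" using As_sub3[OF w0 s0 a_def] sub by blast
    then have c1: "card (As w i0 s0) \<le> card (EE w i0 s0 a \<union> EE w i0 s0 (\<i> * a))"
      by (rule card_mono[rotated]) (simp add: finite_EE)
    have c2: "card (EE w i0 s0 a \<union> EE w i0 s0 (\<i> * a)) + card (EE w i0 s0 a \<inter> EE w i0 s0 (\<i> * a))
       = 2 * (\<Prod>j\<in>UNIV. f j)"
      using card_Un_Int[OF finite_EE finite_EE, of w i0 s0 a w i0 s0 "\<i> * a"] fE fE2 by simp
    have fle: "f j \<le> gg w i0 j" for j unfolding f_def by (rule cardBB_le[OF st(1)])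
    show ?thesis
    proof (cases "\<forall>j. f j = gg w i0 j")
      case True
      then have P: "(\<Prod>j\<in>UNIV. f j) = G" unfolding G_def by simp
      have "hh w j \<le> card (BB w i0 s0 a j \<inter> BB w i0 s0 (\<i> * a) j)" for j
      proof -
        consider "j = i0" | "j \<noteq> i0" "w$j \<noteq> 0" | "j \<noteq> i0" "w$j = 0" by blast
        then show ?thesis
        proof cases
          case 1 then show ?thesis using st(3,4) w0 by (simp add: hh_def)
        next
          case 2
          have "NN (a * w$j) = 2" using True card_BB_other[OF 2(1)] 2 unfolding f_def gg_def
            by metis
          moreover have "a * w$j \<noteq> 0" using st(1) 2(2) by simp
          ultimately have "MM (a * w$j) \<ge> 1" using MM_ge1 by blast
          then show ?thesis unfolding BB_Int_other[OF 2(1)] MM_def hh_def using 2 by simp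
        next
          case 3 then show ?thesis using BB_zero[OF 3] card_QPSK by (simp add: hh_def)
        qed
      qed
      then have "(\<Prod>j\<in>UNIV. hh w j) \<le> card (EE w i0 s0 a \<inter> EE w i0 s0 (\<i> * a))"
        unfolding card_EE_Int by (intro prod_mono) simp
      then have "K \<le> card (EE w i0 s0 a \<inter> EE w i0 s0 (\<i> * a))" unfolding K_def n_def prod_hh .
      then show ?thesis using c1 c2 P X(1) by linarith
    next
      case False
      then obtain j where j: "f j \<noteq> gg w i0 j" by blast
      have "2 * f j \<le> gg w i0 j"
      proof -
        consider "j = i0" | "j \<noteq> i0" "w$j \<noteq> 0" | "j \<noteq> i0" "w$j = 0" by blast
        then show ?thesis
        proof cases
          case 1 then show ?thesis using st(3) j by (simp add: f_def gg_def)
        next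
          case 2 then show ?thesis using fle[of j] j by (simp add: gg_def)
        next
          case 3 then show ?thesis using BB_zero[OF 3] card_QPSK j by (simp add: f_def gg_def)
        qed
      qed
      then have "2 * (\<Prod>j\<in>UNIV. f j) \<le> G" unfolding G_def by (rule prod_half[OF fle])
      then show ?thesis using c1 c2 X(2) by linarith
    qed
  qed
  then show ?thesis unfolding n_def K_def .
qed

lemma card_Aset: fixes w :: "complex^'d"
  shows "card (Aset w) = (\<Sum>s0\<in>QPSK. card (As w i0 s0))"
proof -
  have "Aset w = (\<Union>s0\<in>QPSK. As w i0 s0)" unfolding As_def Aset_def by auto
  moreover have "card (\<Union>s0\<in>QPSK. As w i0 s0) = (\<Sum>s0\<in>QPSK. card (As w i0 s0))"
  proof (rule card_UN_disjoint)
    show "finite QPSK" by (rule finite_QPSK)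
    show "\<forall>s0\<in>QPSK. finite (As w i0 s0)" using finite_As by blast
    show "\<forall>s0\<in>QPSK. \<forall>s1\<in>QPSK. s0 \<noteq> s1 \<longrightarrow> As w i0 s0 \<inter> As w i0 s1 = {}"
      by (auto simp: As_def)
  qed
  ultimately show ?thesis by simp
qed

lemma Aset_upper: fixes w :: "complex^'d" assumes "w$i0 \<noteq> 0"
  shows "card (Aset w) \<le> 4 * ((2^norm0 w - 1) * 4^(CARD('d) - norm0 w))"
proof -
  have "(\<Sum>s0\<in>QPSK. card (As w i0 s0)) \<le> card QPSK * ((2^norm0 w - 1) * 4^(CARD('d) - norm0 w))"
    using sum_bounded_above[of QPSK "\<lambda>s0. card (As w i0 s0)" "(2^norm0 w - 1) * 4^(CARD('d) - norm0 w)"]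
      As_upper[OF assms] by simp
  then show ?thesis unfolding card_Aset[of w i0] card_QPSK .
qed

lemma As_lower:
  fixes w :: "complex^'d"
  assumes wdef: "w = (\<chi> j. if j \<in> T then 1 else 0)" and i0: "i0 \<in> T" and s0: "s0 \<in> QPSK"
  shows "(2^norm0 w - 1) * 4^(CARD('d) - norm0 w) \<le> card (As w i0 s0)"
proof -
  have w0: "w$i0 \<noteq> 0" using wdef i0 by simp
  define a where "a = (\<i> - 1) * s0 / w$i0"
  note st = setup_a[OF w0 s0 a_def]
  have at: "a = (\<i> - 1) * s0" using a_def wdef i0 by simp
  define n where "n = norm0 w"
  define K where "K = (4::nat)^(CARD('d) - n)"
  define G where "G = (\<Prod>j\<in>UNIV. gg w i0 j)"
  have G: "G = 2^(n-1) * K" unfolding G_def K_def n_def using prod_gg[OF w0] .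
  have n1: "n \<ge> 1" unfolding n_def using norm0_ge1[OF w0] .
  note X = arith_X[OF n1 G]
  define f where "f j = card (BB w i0 s0 a j)" for j
  have fE: "card (EE w i0 s0 a) = (\<Prod>j\<in>UNIV. f j)" unfolding f_def card_EE ..
  have fE2: "card (EE w i0 s0 (\<i> * a)) = (\<Prod>j\<in>UNIV. f j)" unfolding f_def card_EE st(5) ..
  have ia: "\<i> * a \<noteq> 0" using st(1) by simp
  have "EE w i0 s0 a \<union> EE w i0 s0 (\<i> * a) \<subseteq> As w i0 s0" unfolding As_eq using st(1) ia by blast
  then have c1: "card (EE w i0 s0 a \<union> EE w i0 s0 (\<i> * a)) \<le> card (As w i0 s0)"
    by (rule card_mono[OF finite_As])
  have c2: "card (EE w i0 s0 a \<union> EE w i0 s0 (\<i> * a)) + card (EE w i0 s0 a \<inter> EE w i0 s0 (\<i> * a))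
     = 2 * (\<Prod>j\<in>UNIV. f j)"
    using card_Un_Int[OF finite_EE finite_EE, of w i0 s0 a w i0 s0 "\<i> * a"] fE fE2 by simp
  have tnz: "(\<i> - 1) * s0 \<noteq> 0" by (rule t_props(3)[OF s0])
  have fge: "gg w i0 j \<le> f j" for j
  proof -
    consider "j = i0" | "j \<noteq> i0" "j \<in> T" | "j \<noteq> i0" "j \<notin> T" by blast
    then show ?thesis
    proof cases
      case 1 then show ?thesis using st(3) by (simp add: f_def gg_def)
    next
      case 2
      then have "f j = NN ((\<i> - 1) * s0)" unfolding f_def card_BB_other[OF 2(1)] using at wdef by simp
      then show ?thesis using NN_t[OF s0] 2 wdef by (simp add: gg_def)
    next
      case 3
      then have "w$j = 0" using wdef by simp
      then show ?thesis using BB_zero[OF 3(1)] card_QPSK by (simp add: f_def gg_def)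
    qed
  qed
  have hle: "card (BB w i0 s0 a j \<inter> BB w i0 s0 (\<i> * a) j) \<le> hh w j" for j
  proof -
    consider "j = i0" | "j \<noteq> i0" "j \<in> T" | "j \<noteq> i0" "j \<notin> T" by blast
    then show ?thesis
    proof cases
      case 1 then show ?thesis using st(3,4) w0 by (simp add: hh_def)
    next
      case 2
      then have "a * w$j = (\<i> - 1) * s0" using at wdef by simp
      then have "card (BB w i0 s0 a j \<inter> BB w i0 s0 (\<i> * a) j) = MM ((\<i> - 1) * s0)"
        unfolding BB_Int_other[OF 2(1)] MM_def by simp
      then show ?thesis using MM_le1[OF tnz] 2 wdef by (simp add: hh_def)
    next
      case 3
      then have "w$j = 0" using wdef by simp
      then show ?thesis using BB_zero[OF 3(1)] card_QPSK by (simp add: hh_def)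
    qed
  qed
  have P: "G \<le> (\<Prod>j\<in>UNIV. f j)" unfolding G_def by (rule prod_mono) (simp add: fge)
  have "card (EE w i0 s0 a \<inter> EE w i0 s0 (\<i> * a)) \<le> (\<Prod>j\<in>UNIV. hh w j)"
    unfolding card_EE_Int by (rule prod_mono) (simp add: hle)
  then have H: "card (EE w i0 s0 a \<inter> EE w i0 s0 (\<i> * a)) \<le> K" unfolding K_def n_def prod_hh .
  have "(2^n - 1) * K \<le> card (As w i0 s0)" using c1 c2 P H X(1) by linarith
  then show ?thesis unfolding n_def K_def .
qed

lemma Aset_lower:
  fixes w :: "complex^'d"
  assumes wdef: "w = (\<chi> j. if j \<in> T then 1 else 0)" and i0: "i0 \<in> T"
  shows "4 * ((2^norm0 w - 1) * 4^(CARD('d) - norm0 w)) \<le> card (Aset w)"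
proof -
  have "card QPSK * ((2^norm0 w - 1) * 4^(CARD('d) - norm0 w)) \<le> (\<Sum>s0\<in>QPSK. card (As w i0 s0))"
    using sum_bounded_below[of QPSK "(2^norm0 w - 1) * 4^(CARD('d) - norm0 w)" "\<lambda>s0. card (As w i0 s0)"]
      As_lower[OF wdef i0] by simp
  then show ?thesis unfolding card_Aset[of w i0] card_QPSK .
qed

lemma final_arith:
  assumes "1 \<le> n" "n \<le> D"
  shows "real (4 * ((2^n - 1) * 4^(D - n))) / 4^D = (2^n - 1) / 4^(n-1)"
proof -
  have d: "D = Suc ((n - 1) + (D - n))" using assms by arith
  have p: "(4::real)^D = 4 * (4^(n-1) * 4^(D-n))" by (subst d) (simp add: power_add)
  have r: "real (2^n - 1 :: nat) = 2^n - 1" by (simp add: of_nat_diff)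
  show ?thesis unfolding p using r by (simp add: field_simps)
qed

lemma norm0_zero_iff: fixes w :: "complex^'d" shows "norm0 w = 0 \<longleftrightarrow> w = 0"
proof -
  have "norm0 w = 0 \<longleftrightarrow> {j. w$j \<noteq> 0} = {}" unfolding norm0_def by simp
  also have "\<dots> \<longleftrightarrow> w = 0" by (simp add: vec_eq_iff)
  finally show ?thesis .
qed

theorem lemma4:
  fixes n :: nat
  assumes "n \<le> CARD('d::finite)"
  shows "(\<exists>w :: complex ^ 'd. norm0 w = n \<and>
            q w = (if n = 0 then 1 else (2 ^ n - 1) / 4 ^ (n - 1))) \<and>
         (\<forall>w :: complex ^ 'd. norm0 w = n \<longrightarrow>
            q w \<le> (if n = 0 then 1 else (2 ^ n - 1) / 4 ^ (n - 1)))"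
proof (cases "n = 0")
  case True
  have "norm0 (0 :: complex^'d) = 0" using norm0_zero_iff[where 'd='d] by blast
  have all: "\<forall>w :: complex^'d. norm0 w = 0 \<longrightarrow> q w \<le> 1"
  proof (intro allI impI)
    fix w :: "complex^'d" assume "norm0 w = 0"
    then have "w = 0" using norm0_zero_iff[where 'd='d] by blast
    then show "q w \<le> 1" using q_zero[where 'd='d] by simp
  qed
  have ex: "\<exists>w :: complex^'d. norm0 w = 0 \<and> q w = 1"
    by (rule exI[of _ 0]) (simp add: q_zero[where 'd='d] \<open>norm0 (0 :: complex^'d) = 0\<close>)
  show ?thesis using True ex all by simp
next
  case False
  then have n1: "1 \<le> n" by simp
  have up: "q w \<le> (2 ^ n - 1) / 4 ^ (n - 1)" if w: "norm0 w = n" for w :: "complex^'d"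
  proof -
    have "w \<noteq> 0"
    proof
      assume "w = 0" then have "norm0 w = 0" by (simp only: norm0_zero_iff)
      then show False using w False by simp
    qed
    then have "\<exists>i. w$i \<noteq> 0" by (simp add: vec_eq_iff)
    then obtain i0 where i0: "w$i0 \<noteq> 0" by blast
    have "card (Aset w) \<le> 4 * ((2^n - 1) * 4^(CARD('d) - n))"
      using Aset_upper[OF i0] unfolding w .
    then have "real (card (Aset w)) \<le> real (4 * ((2^n - 1) * 4^(CARD('d) - n)))"
      by (simp only: of_nat_le_iff)
    then have "real (card (Aset w)) / 4 ^ CARD('d) \<le> real (4 * ((2^n - 1) * 4^(CARD('d) - n))) / 4 ^ CARD('d)"
      by (rule divide_right_mono) simp
    then show ?thesis unfolding q_eq[OF \<open>w \<noteq> 0\<close>] final_arith[OF n1 assms] .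
  qed
  obtain T :: "'d set" where T: "T \<subseteq> UNIV" "card T = n" "finite T"
    by (rule obtain_subset_with_card_n[of n "UNIV :: 'd set"]) (rule assms)
  have "T \<noteq> {}" using T(2) False by (intro notI) simp
  then obtain i0 where i0: "i0 \<in> T" by blast
  define w :: "complex^'d" where "w = (\<chi> j. if j \<in> T then 1 else 0)"
  have "{j. w$j \<noteq> 0} = T" unfolding w_def by auto
  then have nw: "norm0 w = n" unfolding norm0_def using T(2) by simp
  have wnz: "w \<noteq> 0"
  proof
    assume "w = 0" then have "norm0 w = 0" by (simp only: norm0_zero_iff)
    then show False using nw False by simp
  qed
  have "4 * ((2^n - 1) * 4^(CARD('d) - n)) \<le> card (Aset w)"
    using Aset_lower[OF w_def i0] unfolding nw .
  then have "real (4 * ((2^n - 1) * 4^(CARD('d) - n))) \<le> real (card (Aset w))"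
    by (simp only: of_nat_le_iff)
  then have "real (4 * ((2^n - 1) * 4^(CARD('d) - n))) / 4 ^ CARD('d) \<le> real (card (Aset w)) / 4 ^ CARD('d)"
    by (rule divide_right_mono) simp
  then have "(2 ^ n - 1) / 4 ^ (n - 1) \<le> q w"
    unfolding q_eq[OF wnz] final_arith[OF n1 assms] .
  then have "q w = (2 ^ n - 1) / 4 ^ (n - 1)" using up[OF nw] by linarith
  then have ex: "\<exists>w :: complex^'d. norm0 w = n \<and> q w = (2 ^ n - 1) / 4 ^ (n - 1)" using nw by blast
  have all: "\<forall>w :: complex^'d. norm0 w = n \<longrightarrow> q w \<le> (2 ^ n - 1) / 4 ^ (n - 1)" using up by blast
  show ?thesis using ex all False by simp
qed

end
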